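(* (1) $Q^{1}_{\mathrm{Mon}}\mathrm{FO}(+,\times)\equiv Q^{\star}_{\mathrm{Mon}}\mathrm{FO}(+,\times)$. (2) $\mathrm{SOM}(Q^{1}_{\mathrm{Mon}},+,\times)\equiv\mathrm{SOM}(Q^{\star}_{\mathrm{Mon}},+,\times)$.
   Context: Strings as structures: a nonempty string $b_0\cdots b_{n-1}$ over the ordered alphabet $(a_1,\dots,a_s)$ is the structure with universe $\{0,\dots,n-1\}$, natural order $<$, and unary predicates $P_{a_i}=\{j:b_j=a_i\}$. FO uses $=$, $<$, these predicates, $\min,\max$, connectives, $\exists,\forall$; SOM adds unary second-order variables and quantifiers. "$+,\times$" means the ternary relations $i+j=k$ and $i\cdot j=k$ are additionally built in. Monadic second-order Lindström quantifiers: for a language $L$ over $(a_1,\dots,a_s)$ and distinct unary variables $\overline X=(X_1,\dots,X_k)$, over universe $\{0,\dots,n-1\}$ and an assignment $(A_1,\dots,A_k)$ let $s^i_j=1$ iff $j\in A_i$. For $Q^1_L$ the $2^{nk}$ assignments are ordered lexicographically by the interleaved code $s^1_0\cdots s^k_0s^1_1\cdots s^k_1\cdots s^1_{n-1}\cdots s^k_{n-1}$; for $Q^\star_L$ by the concatenated code $s^1_0\cdots s^1_{n-1}\cdots s^k_0\cdots s^k_{n-1}$. Then $\mathcal A\models Q\overline X[\varphi_1,\dots,\varphi_{s-1}]$ iff the word of length $2^{nk}$ whose $i$-th letter is $a_j$ for the least $j$ with $\varphi_j$ true at the $i$-th assignment (and $a_s$ if none) lies in $L$. A monoid is a finite set $M$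 with an associative binary operation with identity; for $S\subseteq M$, the word-problem $\mathcal W(S,M)$ is the set of words over alphabet $M$ whose product lies in $S$. $Q^{1}_{\mathrm{Mon}}\mathrm{FO}(+,\times)$ (resp. $Q^{\star}_{\mathrm{Mon}}\mathrm{FO}(+,\times)$) consists of formulas $Q^1_L\overline X[\varphi_1,\dots,\varphi_{s-1}]$ (resp. with $Q^\star_L$), $L$ a monoid word-problem, $\varphi_i$ first-order with built-in $+,\times$. $\mathrm{SOM}(Q^{1}_{\mathrm{Mon}},+,\times)$ (resp. with $\star$) is SOM with built-in $+,\times$ closed under nested application of $Q^1_L$ (resp. $Q^\star_L$) for monoid word-problems $L$. $\mathcal L\equiv\mathcal L'$ means that over every string signature every sentence of either logic has an equivalent sentence of the other. *)

theory Defs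
  imports Main
begin

text \<open>Strings over the ordered alphabet (a_1,...,a_s) are lists of naturals < s,
 letter a_i being encoded as i-1. First-order variables and unary second-order
 variables are natural numbers.\<close>

datatype tm = Var nat | Min | Max

datatype qkind = Interleaved | Concatenated

datatype fm =
    Eq tm tm
  | Less tm tm
  | Pred nat tm
  | Plus tm tm tm
  | Times tm tm tm
  | SOAtom nat tm
  | Neg fm
  | Conj fm fm
  | Disj fm fm
  | Ex nat fm
  | All nat fm
  | ExS nat fm
  | AllS nat fm
  | LQ qkind nat "nat list \<Rightarrow> bool" "nat list" "fm list"
    \<comment> \<open>LQ q m L Xs phis: Lindstroem quantifier Q^q_L Xs [phis], L a language over
        the ordered alphabet 0,...,m-1\<close>

fun tval :: "nat list \<Rightarrow> (nat \<Rightarrow> nat) \<Rightarrow> tm \<Rightarrow> nat" where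
  "tval w I (Var x) = I x"
| "tval w I Min = 0"
| "tval w I Max = length w - 1"

text \<open>bit number p (0 = most significant) of the length-N binary code of i\<close>
definition codebit :: "nat \<Rightarrow> nat \<Rightarrow> nat \<Rightarrow> bool" where
  "codebit N i p = odd (i div 2 ^ (N - 1 - p))"

text \<open>The value A_{t+1} (t < k) of the i-th assignment (0-based, lexicographic order of codes)
 over universe {0..<n} with k set variables.\<close>
fun asg :: "qkind \<Rightarrow> nat \<Rightarrow> nat \<Rightarrow> nat \<Rightarrow> nat \<Rightarrow> nat set" where
  "asg Interleaved n k i t = {j. j < n \<and> codebit (n*k) i (j*k + t)}"
| "asg Concatenated n k i t = {j. j < n \<and> codebit (n*k) i (t*n + j)}"

definition upd_list :: "(nat \<Rightarrow> nat set) \<Rightarrow> nat list \<Rightarrow> nat set list \<Rightarrow> (nat \<Rightarrow> nat set)" where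
  "upd_list J Xs As = fold (\<lambda>(X, A) J. J(X := A)) (zip Xs As) J"

text \<open>letter determined by truth values of phi_1,...,phi_{m-1} (0-based letters)\<close>
definition letter_of :: "bool list \<Rightarrow> nat \<Rightarrow> nat" where
  "letter_of bs m = (if \<exists>j < length bs. bs ! j then (LEAST j. j < length bs \<and> bs ! j) else m - 1)"

fun sat :: "nat list \<Rightarrow> (nat \<Rightarrow> nat) \<Rightarrow> (nat \<Rightarrow> nat set) \<Rightarrow> fm \<Rightarrow> bool" where
  "sat w I J (Eq t1 t2) = (tval w I t1 = tval w I t2)"
| "sat w I J (Less t1 t2) = (tval w I t1 < tval w I t2)"
| "sat w I J (Pred a t) = (tval w I t < length w \<and> w ! tval w I t = a)"
| "sat w I J (Plus t1 t2 t3) = (tval w I t1 + tval w I t2 = tval w I t3)"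
| "sat w I J (Times t1 t2 t3) = (tval w I t1 * tval w I t2 = tval w I t3)"
| "sat w I J (SOAtom X t) = (tval w I t \<in> J X)"
| "sat w I J (Neg \<phi>) = (\<not> sat w I J \<phi>)"
| "sat w I J (Conj \<phi> \<psi>) = (sat w I J \<phi> \<and> sat w I J \<psi>)"
| "sat w I J (Disj \<phi> \<psi>) = (sat w I J \<phi> \<or> sat w I J \<psi>)"
| "sat w I J (Ex x \<phi>) = (\<exists>a < length w. sat w (I(x := a)) J \<phi>)"
| "sat w I J (All x \<phi>) = (\<forall>a < length w. sat w (I(x := a)) J \<phi>)"
| "sat w I J (ExS X \<phi>) = (\<exists>A \<subseteq> {0..<length w}. sat w I (J(X := A)) \<phi>)"
| "sat w I J (AllS X \<phi>) = (\<forall>A \<subseteq> {0..<length w}. sat w I (J(X := A)) \<phi>)"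
| "sat w I J (LQ q m L Xs \<phi>s) =
     L (map (\<lambda>i. letter_of
          (map (\<lambda>\<phi>. sat w I (upd_list J Xs (map (asg q (length w) (length Xs) i) [0..<length Xs])) \<phi>) \<phi>s) m)
        [0..<2 ^ (length w * length Xs)])"

fun tfv :: "tm \<Rightarrow> nat set" where
  "tfv (Var x) = {x}"
| "tfv Min = {}"
| "tfv Max = {}"

fun fv :: "fm \<Rightarrow> nat set" where
  "fv (Eq t1 t2) = tfv t1 \<union> tfv t2"
| "fv (Less t1 t2) = tfv t1 \<union> tfv t2"
| "fv (Pred a t) = tfv t"
| "fv (Plus t1 t2 t3) = tfv t1 \<union> tfv t2 \<union> tfv t3"
| "fv (Times t1 t2 t3) = tfv t1 \<union> tfv t2 \<union> tfv t3"
| "fv (SOAtom X t) = tfv t"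
| "fv (Neg \<phi>) = fv \<phi>"
| "fv (Conj \<phi> \<psi>) = fv \<phi> \<union> fv \<psi>"
| "fv (Disj \<phi> \<psi>) = fv \<phi> \<union> fv \<psi>"
| "fv (Ex x \<phi>) = fv \<phi> - {x}"
| "fv (All x \<phi>) = fv \<phi> - {x}"
| "fv (ExS X \<phi>) = fv \<phi>"
| "fv (AllS X \<phi>) = fv \<phi>"
| "fv (LQ q m L Xs \<phi>s) = (\<Union>\<phi>\<in>set \<phi>s. fv \<phi>)"

fun fsv :: "fm \<Rightarrow> nat set" where
  "fsv (SOAtom X t) = {X}"
| "fsv (Neg \<phi>) = fsv \<phi>"
| "fsv (Conj \<phi> \<psi>) = fsv \<phi> \<union> fsv \<psi>"
| "fsv (Disj \<phi> \<psi>) = fsv \<phi> \<union> fsv \<psi>"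
| "fsv (Ex x \<phi>) = fsv \<phi>"
| "fsv (All x \<phi>) = fsv \<phi>"
| "fsv (ExS X \<phi>) = fsv \<phi> - {X}"
| "fsv (AllS X \<phi>) = fsv \<phi> - {X}"
| "fsv (LQ q m L Xs \<phi>s) = (\<Union>\<phi>\<in>set \<phi>s. fsv \<phi>) - set Xs"
| "fsv _ = {}"

definition sentence :: "fm \<Rightarrow> bool" where
  "sentence \<phi> \<longleftrightarrow> fv \<phi> = {} \<and> fsv \<phi> = {}"

text \<open>A finite monoid with alphabet ordering is w.l.o.g. carried by {0..<m} (element j = the
 (j+1)-st letter).  L is the word problem W(S,M) on words over {0..<m}.\<close>
definition monoid_wp :: "nat \<Rightarrow> (nat list \<Rightarrow> bool) \<Rightarrow> bool" where
  "monoid_wp m L \<longleftrightarrow> (\<exists>mult e S.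
     e < m \<and> S \<subseteq> {0..<m} \<and>
     (\<forall>x<m. \<forall>y<m. mult x y < m) \<and>
     (\<forall>x<m. \<forall>y<m. \<forall>z<m. mult (mult x y) z = mult x (mult y z)) \<and>
     (\<forall>x<m. mult e x = x \<and> mult x e = x) \<and>
     (\<forall>u. set u \<subseteq> {0..<m} \<longrightarrow> (L u \<longleftrightarrow> foldl mult e u \<in> S)))"

fun atoms_ok :: "nat \<Rightarrow> fm \<Rightarrow> bool" where
  "atoms_ok s (Pred a t) = (a < s)"
| "atoms_ok s _ = True"

text \<open>first-order formulas with built-in +,x (may mention set variables as atoms)\<close>
fun is_FO :: "nat \<Rightarrow> fm \<Rightarrow> bool" where
  "is_FO s (Neg \<phi>) = is_FO s \<phi>"
| "is_FO s (Conj \<phi> \<psi>) = (is_FO s \<phi> \<and> is_FO s \<psi>)"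
| "is_FO s (Disj \<phi> \<psi>) = (is_FO s \<phi> \<and> is_FO s \<psi>)"
| "is_FO s (Ex x \<phi>) = is_FO s \<phi>"
| "is_FO s (All x \<phi>) = is_FO s \<phi>"
| "is_FO s (ExS X \<phi>) = False"
| "is_FO s (AllS X \<phi>) = False"
| "is_FO s (LQ q m L Xs \<phi>s) = False"
| "is_FO s \<phi> = atoms_ok s \<phi>"

definition good_mon_quant :: "nat \<Rightarrow> (nat list \<Rightarrow> bool) \<Rightarrow> nat list \<Rightarrow> fm list \<Rightarrow> bool" where
  "good_mon_quant m L Xs \<phi>s \<longleftrightarrow> 1 \<le> m \<and> monoid_wp m L \<and> length \<phi>s = m - 1 \<and> distinct Xs \<and> Xs \<noteq> []"

fun QMonFO :: "qkind \<Rightarrow> nat \<Rightarrow> fm \<Rightarrow> bool" where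
  "QMonFO q s (LQ q' m L Xs \<phi>s) =
     (q' = q \<and> good_mon_quant m L Xs \<phi>s \<and> (\<forall>\<phi>\<in>set \<phi>s. is_FO s \<phi>))"
| "QMonFO q s _ = False"

fun SOMQ :: "qkind \<Rightarrow> nat \<Rightarrow> fm \<Rightarrow> bool" where
  "SOMQ q s (Neg \<phi>) = SOMQ q s \<phi>"
| "SOMQ q s (Conj \<phi> \<psi>) = (SOMQ q s \<phi> \<and> SOMQ q s \<psi>)"
| "SOMQ q s (Disj \<phi> \<psi>) = (SOMQ q s \<phi> \<and> SOMQ q s \<psi>)"
| "SOMQ q s (Ex x \<phi>) = SOMQ q s \<phi>"
| "SOMQ q s (All x \<phi>) = SOMQ q s \<phi>"
| "SOMQ q s (ExS X \<phi>) = SOMQ q s \<phi>"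
| "SOMQ q s (AllS X \<phi>) = SOMQ q s \<phi>"
| "SOMQ q s (LQ q' m L Xs \<phi>s) =
     (q' = q \<and> good_mon_quant m L Xs \<phi>s \<and> (\<forall>\<phi>\<in>set \<phi>s. SOMQ q s \<phi>))"
| "SOMQ q s \<phi> = atoms_ok s \<phi>"

definition models :: "nat list \<Rightarrow> fm \<Rightarrow> bool" where
  "models w \<phi> = sat w (\<lambda>_. 0) (\<lambda>_. {}) \<phi>"

definition equivalent_on :: "nat \<Rightarrow> fm \<Rightarrow> fm \<Rightarrow> bool" where
  "equivalent_on s \<phi> \<psi> \<longleftrightarrow>
     (\<forall>w. w \<noteq> [] \<and> set w \<subseteq> {0..<s} \<longrightarrow> (models w \<phi> \<longleftrightarrow> models w \<psi>))"

definition logic_equiv :: "(nat \<Rightarrow> fm \<Rightarrow> bool) \<Rightarrow> (nat \<Rightarrow> fm \<Rightarrow> bool) \<Rightarrow> bool" where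
  "logic_equiv \<L>1 \<L>2 \<longleftrightarrow> (\<forall>s \<ge> 1.
     (\<forall>\<phi>. \<L>1 s \<phi> \<and> sentence \<phi> \<longrightarrow> (\<exists>\<psi>. \<L>2 s \<psi> \<and> sentence \<psi> \<and> equivalent_on s \<phi> \<psi>)) \<and>
     (\<forall>\<psi>. \<L>2 s \<psi> \<and> sentence \<psi> \<longrightarrow> (\<exists>\<phi>. \<L>1 s \<phi> \<and> sentence \<phi> \<and> equivalent_on s \<phi> \<psi>)))"

end

theory Submission
  imports Defs
begin


lemma upd_list_Cons: "upd_list J (X#Xs) (A#As) = upd_list (J(X:=A)) Xs As"
  by (simp add: upd_list_def)

lemma upd_list_Nil2[simp]: "upd_list J Xs [] = J" by (simp add: upd_list_def)
lemma upd_list_Nil1[simp]: "upd_list J [] As = J" by (simp add: upd_list_def)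

lemma upd_list_notin: "Y \<notin> set Xs \<Longrightarrow> upd_list J Xs As Y = J Y"
proof (induction Xs arbitrary: J As)
  case Nil then show ?case by (simp add: upd_list_def)
next
  case (Cons X Xs) then show ?case
    by (cases As) (auto simp: upd_list_Cons)
qed

lemma upd_list_eq: "Y \<in> set Xs \<Longrightarrow> length As = length Xs \<Longrightarrow> upd_list J Xs As Y = upd_list J' Xs As Y"
proof (induction Xs arbitrary: J J' As)
  case Nil then show ?case by simp
next
  case (Cons X Xs)
  then obtain A As' where As: "As = A # As'" by (cases As) auto
  show ?case
  proof (cases "Y \<in> set Xs")
    case True then show ?thesis using Cons As by (simp add: upd_list_Cons)
  next
    case False then have "Y = X" using Cons by auto
    then show ?thesis using False As by (simp add: upd_list_Cons upd_list_notin)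
  qed
qed

lemma upd_list_nth: "distinct Xs \<Longrightarrow> length As = length Xs \<Longrightarrow> t < length Xs \<Longrightarrow> upd_list J Xs As (Xs!t) = As!t"
proof (induction Xs arbitrary: J As t)
  case Nil then show ?case by simp
next
  case (Cons X Xs)
  then obtain A As' where As: "As = A # As'" by (cases As) auto
  show ?case
  proof (cases t)
    case 0 then show ?thesis using Cons As by (simp add: upd_list_Cons upd_list_notin)
  next
    case (Suc t') then show ?thesis using Cons As by (simp add: upd_list_Cons)
  qed
qed

lemma tval_upd: "z \<notin> tfv t \<Longrightarrow> tval w (I(z:=a)) t = tval w I t"
  by (cases t) auto

lemma tval_lt: "\<forall>x. I x < length w \<Longrightarrow> w \<noteq> [] \<Longrightarrow> tval w I t < length w"
  by (cases t) auto

fun tv :: "tm \<Rightarrow> nat" where "tv (Var x) = x" | "tv _ = 0"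

lemma tv_fresh: "tv t < z \<Longrightarrow> z \<notin> tfv t" by (cases t) auto

lemma coincidence: "(\<forall>X\<in>fsv \<phi>. J X = J' X) \<Longrightarrow> sat w I J \<phi> = sat w I J' \<phi>"
proof (induction \<phi> arbitrary: I J J')
  case (LQ q m L Xs \<phi>s)
  have "\<And>(As::nat set list) \<phi>. \<phi> \<in> set \<phi>s \<Longrightarrow> length As = length Xs \<Longrightarrow>
     sat w I (upd_list J Xs As) \<phi> = sat w I (upd_list J' Xs As) \<phi>"
  proof -
    fix As :: "nat set list" and \<phi> assume a: "\<phi> \<in> set \<phi>s" "length As = length Xs"
    show "sat w I (upd_list J Xs As) \<phi> = sat w I (upd_list J' Xs As) \<phi>"
    proof (rule LQ.IH[OF a(1)], intro ballI)
      fix X assume X: "X \<in> fsv \<phi>"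
      show "upd_list J Xs As X = upd_list J' Xs As X"
      proof (cases "X \<in> set Xs")
        case True then show ?thesis using upd_list_eq a by blast
      next
        case False then show ?thesis using LQ.prems X a by (auto simp: upd_list_notin)
      qed
    qed
  qed
  then show ?case by (simp cong: map_cong)
next
  case (Conj a b)
  then have "sat w I J a = sat w I J' a" "sat w I J b = sat w I J' b" by auto
  then show ?case by simp
next
  case (Disj a b)
  then have "sat w I J a = sat w I J' a" "sat w I J b = sat w I J' b" by auto
  then show ?case by simp
next
  case (Ex x \<phi>)
  then have "\<And>a. sat w (I(x:=a)) J \<phi> = sat w (I(x:=a)) J' \<phi>" by auto
  then show ?case by simp
next
  case (All x \<phi>)
  then have "\<And>a. sat w (I(x:=a)) J \<phi> = sat w (I(x:=a)) J' \<phi>" by auto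
  then show ?case by simp
next
  case (ExS X \<phi>)
  then have "\<And>A. sat w I (J(X:=A)) \<phi> = sat w I (J'(X:=A)) \<phi>" by auto
  then show ?case by simp
next
  case (AllS X \<phi>)
  then have "\<And>A. sat w I (J(X:=A)) \<phi> = sat w I (J'(X:=A)) \<phi>" by auto
  then show ?case by simp
qed auto



definition FF :: fm where "FF = Neg (Eq Min Min)"

definition SuccF :: "tm \<Rightarrow> tm \<Rightarrow> fm" where
  "SuccF a b = Conj (Less a b) (Neg (Ex (Suc (tv a + tv b)) (Conj (Less a (Var (Suc (tv a + tv b)))) (Less (Var (Suc (tv a + tv b))) b))))"

lemma sat_SuccF:
  assumes "\<forall>x. I x < length w" "w \<noteq> []"
  shows "sat w I J (SuccF a b) \<longleftrightarrow> tval w I b = tval w I a + 1"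
proof -
  let ?v = "Suc (tv a + tv b)"
  have fa: "?v \<notin> tfv a" "?v \<notin> tfv b" by (auto intro!: tv_fresh)
  have "tval w I b < length w" using tval_lt assms by blast
  then show ?thesis
    by (auto simp: SuccF_def tval_upd[OF fa(1)] tval_upd[OF fa(2)])
qed

definition OvfF :: "tm \<Rightarrow> tm \<Rightarrow> tm \<Rightarrow> fm" where
  "OvfF z x r = Ex (Suc (tv z + tv x + tv r)) (Conj (Plus x (Var (Suc (tv z + tv x + tv r))) Max)
      (Ex (Suc (Suc (tv z + tv x + tv r))) (Conj (Plus r (Var (Suc (tv z + tv x + tv r))) (Var (Suc (Suc (tv z + tv x + tv r)))))
         (SuccF (Var (Suc (Suc (tv z + tv x + tv r)))) z))))"

lemma sat_OvfF:
  assumes I: "\<forall>x. I x < length w" and w: "w \<noteq> []"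
  shows "sat w I J (OvfF z x r) \<longleftrightarrow> tval w I z + tval w I x = tval w I r + length w"
proof -
  let ?d = "Suc (tv z + tv x + tv r)"
  let ?e = "Suc ?d"
  have f: "?d \<notin> tfv z" "?d \<notin> tfv x" "?d \<notin> tfv r" "?e \<notin> tfv z" "?e \<notin> tfv x" "?e \<notin> tfv r"
    by (auto intro!: tv_fresh)
  have lt: "tval w I z < length w" "tval w I x < length w" "tval w I r < length w"
    using tval_lt I w by blast+
  have I2: "\<And>a b. a < length w \<Longrightarrow> b < length w \<Longrightarrow> \<forall>y. (I(?d := a, ?e := b)) y < length w"
    using I by auto
  have "sat w I J (OvfF z x r) \<longleftrightarrow> (\<exists>a<length w. tval w I x + a = length w - 1 \<and>
       (\<exists>b<length w. tval w I r + a = b \<and> tval w I z = b + 1))"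
    unfolding OvfF_def
    apply (simp only: sat.simps)
    apply (intro ex_cong1 conj_cong refl)
    apply (simp add: tval_upd f)
    apply (simp add: tval_upd f)
    apply (subst sat_SuccF)
    using I2 w apply (auto simp: tval_upd f)
    done
  also have "\<dots> \<longleftrightarrow> tval w I z + tval w I x = tval w I r + length w"
  proof
    assume "\<exists>a<length w. tval w I x + a = length w - 1 \<and> (\<exists>b<length w. tval w I r + a = b \<and> tval w I z = b + 1)"
    then show "tval w I z + tval w I x = tval w I r + length w" using w by auto
  next
    assume h: "tval w I z + tval w I x = tval w I r + length w"
    show "\<exists>a<length w. tval w I x + a = length w - 1 \<and> (\<exists>b<length w. tval w I r + a = b \<and> tval w I z = b + 1)"
      apply (rule exI[of _ "length w - 1 - tval w I x"])
      using h lt by auto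
  qed
  finally show ?thesis .
qed



fun AF :: "nat \<Rightarrow> nat \<Rightarrow> nat \<Rightarrow> tm \<Rightarrow> tm \<Rightarrow> fm" where
  "AF 0 0 q x r = (if q = 0 then Eq r Min else FF)"
| "AF 0 (Suc d) q x r = Ex (Suc (tv x + tv r))
     (Disj (Conj (AF 0 d q x (Var (Suc (tv x + tv r)))) (SuccF (Var (Suc (tv x + tv r))) r))
           (if q = 0 then FF else Conj (AF 0 d (q - 1) x (Var (Suc (tv x + tv r))))
                (Conj (Eq (Var (Suc (tv x + tv r))) Max) (Eq r Min))))"
| "AF (Suc c) d q x r = Ex (Suc (tv x + tv r))
     (Disj (Conj (AF c d q x (Var (Suc (tv x + tv r)))) (Plus (Var (Suc (tv x + tv r))) x r))
           (if q = 0 then FF else Conj (AF c d (q - 1) x (Var (Suc (tv x + tv r))))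
                (OvfF (Var (Suc (tv x + tv r))) x r)))"

lemma sat_AF:
  assumes "\<forall>y. I y < length w" "w \<noteq> []"
  shows "sat w I J (AF c d q x r) \<longleftrightarrow> c * tval w I x + d = q * length w + tval w I r"
  using assms
proof (induction c d q x r arbitrary: I rule: AF.induct)
  case (1 q x r)
  then show ?case by (auto simp: FF_def)
next
  case (2 d q x r)
  let ?z = "Suc (tv x + tv r)"
  let ?n = "length w"
  have f: "?z \<notin> tfv x" "?z \<notin> tfv r" by (auto intro!: tv_fresh)
  have I2: "\<And>a. a < ?n \<Longrightarrow> \<forall>y. (I(?z := a)) y < ?n" using "2.prems" by auto
  have lt: "tval w I r < ?n" using tval_lt "2.prems" by blast
  have "sat w I J (AF 0 (Suc d) q x r) \<longleftrightarrow> (\<exists>a<?n. (d = q * ?n + a \<and> tval w I r = a + 1) \<or>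
        (q \<noteq> 0 \<and> d = (q - 1) * ?n + a \<and> a = ?n - 1 \<and> tval w I r = 0))"
    apply (simp only: AF.simps sat.simps)
    apply (intro ex_cong1 conj_cong disj_cong refl)
    using "2.IH" I2 "2.prems" by (auto simp: FF_def sat_SuccF tval_upd f)
  also have "\<dots> \<longleftrightarrow> Suc d = q * ?n + tval w I r"
  proof
    assume "\<exists>a<?n. (d = q * ?n + a \<and> tval w I r = a + 1) \<or>
        (q \<noteq> 0 \<and> d = (q - 1) * ?n + a \<and> a = ?n - 1 \<and> tval w I r = 0)"
    then obtain a where aa: "a < ?n" and hh: "(d = q * ?n + a \<and> tval w I r = a + 1) \<or>
        (q \<noteq> 0 \<and> d = (q - 1) * ?n + a \<and> a = ?n - 1 \<and> tval w I r = 0)" by blast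
    from hh show "Suc d = q * ?n + tval w I r"
    proof
      assume h: "q \<noteq> 0 \<and> d = (q - 1) * ?n + a \<and> a = ?n - 1 \<and> tval w I r = 0"
      then obtain q' where "q = Suc q'" by (cases q) auto
      then show ?thesis using h "2.prems" by auto
    qed auto
  next
    assume h: "Suc d = q * ?n + tval w I r"
    show "\<exists>a<?n. (d = q * ?n + a \<and> tval w I r = a + 1) \<or>
        (q \<noteq> 0 \<and> d = (q - 1) * ?n + a \<and> a = ?n - 1 \<and> tval w I r = 0)"
    proof (cases "tval w I r")
      case 0
      with h obtain q' where q: "q = Suc q'" by (cases q) auto
      show ?thesis
        apply (rule exI[of _ "?n - 1"])
        using h 0 q "2.prems" by auto
    next
      case (Suc a)
      then show ?thesis using h lt by auto
    qed
  qed
  finally show ?case by simp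
next
  case (3 c d q x r)
  let ?z = "Suc (tv x + tv r)"
  let ?n = "length w"
  have f: "?z \<notin> tfv x" "?z \<notin> tfv r" by (auto intro!: tv_fresh)
  have I2: "\<And>a. a < ?n \<Longrightarrow> \<forall>y. (I(?z := a)) y < ?n" using "3.prems" by auto
  have lt: "tval w I r < ?n" "tval w I x < ?n" using tval_lt "3.prems" by blast+
  have "sat w I J (AF (Suc c) d q x r) \<longleftrightarrow> (\<exists>a<?n. (c * tval w I x + d = q * ?n + a \<and> a + tval w I x = tval w I r) \<or>
        (q \<noteq> 0 \<and> c * tval w I x + d = (q - 1) * ?n + a \<and> a + tval w I x = tval w I r + ?n))"
    apply (simp only: AF.simps sat.simps)
    apply (intro ex_cong1 conj_cong disj_cong refl)
    using "3.IH" I2 "3.prems" by (auto simp: FF_def sat_OvfF tval_upd f)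
  also have "\<dots> \<longleftrightarrow> Suc c * tval w I x + d = q * ?n + tval w I r"
  proof
    assume "\<exists>a<?n. (c * tval w I x + d = q * ?n + a \<and> a + tval w I x = tval w I r) \<or>
        (q \<noteq> 0 \<and> c * tval w I x + d = (q - 1) * ?n + a \<and> a + tval w I x = tval w I r + ?n)"
    then obtain a where aa: "a < ?n" and hh: "(c * tval w I x + d = q * ?n + a \<and> a + tval w I x = tval w I r) \<or>
        (q \<noteq> 0 \<and> c * tval w I x + d = (q - 1) * ?n + a \<and> a + tval w I x = tval w I r + ?n)" by blast
    from hh show "Suc c * tval w I x + d = q * ?n + tval w I r"
    proof
      assume h: "q \<noteq> 0 \<and> c * tval w I x + d = (q - 1) * ?n + a \<and> a + tval w I x = tval w I r + ?n"
      then obtain q' where "q = Suc q'" by (cases q) auto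
      then show ?thesis using h by auto
    qed auto
  next
    assume h: "Suc c * tval w I x + d = q * ?n + tval w I r"
    show "\<exists>a<?n. (c * tval w I x + d = q * ?n + a \<and> a + tval w I x = tval w I r) \<or>
        (q \<noteq> 0 \<and> c * tval w I x + d = (q - 1) * ?n + a \<and> a + tval w I x = tval w I r + ?n)"
    proof (cases "tval w I x \<le> tval w I r")
      case True
      show ?thesis
        apply (rule exI[of _ "tval w I r - tval w I x"])
        using h True lt by auto
    next
      case False
      with h obtain q' where q: "q = Suc q'" by (cases q) auto
      show ?thesis
        apply (rule exI[of _ "tval w I r + ?n - tval w I x"])
        using h False q lt by auto
    qed
  qed
  finally show ?case .
qed

lemma fsv_AF: "fsv (AF c d q x r) = {}"
  by (induction c d q x r rule: AF.induct) (auto simp: FF_def SuccF_def OvfF_def)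

lemma fv_AF: "fv (AF c d q x r) \<subseteq> tfv x \<union> tfv r"
proof (induction c d q x r rule: AF.induct)
  case (2 d q x r)
  have "Suc (tv x + tv r) \<notin> tfv x" "Suc (tv x + tv r) \<notin> tfv r" by (auto intro!: tv_fresh)
  then show ?case using 2 by (cases x; cases r; auto simp: FF_def SuccF_def OvfF_def)
next
  case (3 c d q x r)
  have "Suc (tv x + tv r) \<notin> tfv x" "Suc (tv x + tv r) \<notin> tfv r" by (auto intro!: tv_fresh)
  then show ?case using 3 by (cases x; cases r; auto simp: FF_def SuccF_def OvfF_def)
qed (auto simp: FF_def)



definition DisjL :: "fm list \<Rightarrow> fm" where "DisjL fs = foldr Disj fs FF"

lemma sat_DisjL: "sat w I J (DisjL fs) \<longleftrightarrow> (\<exists>f\<in>set fs. sat w I J f)"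
  by (induction fs) (auto simp: DisjL_def FF_def)

lemma fsv_DisjL: "fsv (DisjL fs) = (\<Union>f\<in>set fs. fsv f)"
  by (induction fs) (auto simp: DisjL_def FF_def)

lemma fv_DisjL: "fv (DisjL fs) = (\<Union>f\<in>set fs. fv f)"
  by (induction fs) (auto simp: DisjL_def FF_def)

fun gen :: "qkind \<Rightarrow> nat list \<Rightarrow> nat \<Rightarrow> tm \<Rightarrow> fm" where
  "gen Interleaved Ys t u = DisjL (map (\<lambda>t'. Ex (Suc (tv u)) (Conj (AF (length Ys) t t' u (Var (Suc (tv u))))
       (SOAtom (Ys!t') (Var (Suc (tv u)))))) [0..<length Ys])"
| "gen Concatenated Ys t' u = DisjL (map (\<lambda>t. Ex (Suc (tv u)) (Conj (AF (length Ys) t t' (Var (Suc (tv u))) u)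
       (SOAtom (Ys!t) (Var (Suc (tv u)))))) [0..<length Ys])"

lemma sat_gen_I:
  assumes I: "\<forall>x. I x < length w" and w: "w \<noteq> []" and t: "t < length Ys"
    and J: "\<forall>t'<length Ys. J (Ys!t') = asg Concatenated (length w) (length Ys) i t'"
  shows "sat w I J (gen Interleaved Ys t u) \<longleftrightarrow> tval w I u \<in> asg Interleaved (length w) (length Ys) i t"
proof -
  let ?k = "length Ys" and ?n = "length w" and ?U = "tval w I u" and ?y = "Suc (tv u)"
  have f: "?y \<notin> tfv u" by (auto intro!: tv_fresh)
  have U: "?U < ?n" using tval_lt I w by blast
  have I2: "\<And>a. a < ?n \<Longrightarrow> \<forall>x. (I(?y := a)) x < ?n" using I by auto
  have "sat w I J (gen Interleaved Ys t u) \<longleftrightarrow>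
     (\<exists>t'<?k. \<exists>a<?n. ?k * ?U + t = t' * ?n + a \<and> a \<in> J (Ys!t'))"
  proof -
    have e: "\<And>t' a. a < ?n \<Longrightarrow> sat w (I(?y:=a)) J (AF ?k t t' u (Var ?y)) \<longleftrightarrow> ?k*?U + t = t'*?n + a"
    proof -
      fix t' a assume a: "a < ?n"
      show "sat w (I(?y:=a)) J (AF ?k t t' u (Var ?y)) \<longleftrightarrow> ?k*?U + t = t'*?n + a"
        using sat_AF[OF I2[OF a] w, of J ?k t t' u "Var ?y"] tval_upd[OF f, of w I a] by (simp only: tval.simps fun_upd_same)
    qed
    show ?thesis by (simp add: sat_DisjL e atLeast0LessThan Bex_def cong: conj_cong)
  qed
  also have "\<dots> \<longleftrightarrow> (\<exists>t'<?k. \<exists>a<?n. ?k * ?U + t = t' * ?n + a \<and> codebit (?n * ?k) i (t' * ?n + a))"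
    using J by auto
  also have "\<dots> \<longleftrightarrow> codebit (?n * ?k) i (?U * ?k + t)"
  proof
    assume "\<exists>t'<?k. \<exists>a<?n. ?k * ?U + t = t' * ?n + a \<and> codebit (?n * ?k) i (t' * ?n + a)"
    then show "codebit (?n * ?k) i (?U * ?k + t)" by (metis mult.commute)
  next
    assume h: "codebit (?n * ?k) i (?U * ?k + t)"
    have n0: "0 < ?n" using w by simp
    have "?k * ?U + t < ?k * ?n"
    proof -
      have "?k * ?U + t < ?k * ?U + ?k" using t by simp
      also have "\<dots> = ?k * (?U + 1)" by simp
      also have "\<dots> \<le> ?k * ?n" using U by (intro mult_le_mono2) simp
      finally show ?thesis .
    qed
    then have "(?k * ?U + t) div ?n < ?k"
      by (intro less_mult_imp_div_less) (simp add: mult.commute)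
    moreover have "?k * ?U + t = ((?k * ?U + t) div ?n) * ?n + (?k * ?U + t) mod ?n" by simp
    ultimately show "\<exists>t'<?k. \<exists>a<?n. ?k * ?U + t = t' * ?n + a \<and> codebit (?n * ?k) i (t' * ?n + a)"
      using h n0 by (metis mod_less_divisor mult.commute)
  qed
  also have "\<dots> \<longleftrightarrow> ?U \<in> asg Interleaved ?n ?k i t" using U by simp
  finally show ?thesis .
qed

lemma sat_gen_C:
  assumes I: "\<forall>x. I x < length w" and w: "w \<noteq> []" and t: "t' < length Ys"
    and J: "\<forall>t<length Ys. J (Ys!t) = asg Interleaved (length w) (length Ys) i t"
  shows "sat w I J (gen Concatenated Ys t' u) \<longleftrightarrow> tval w I u \<in> asg Concatenated (length w) (length Ys) i t'"
proof -
  let ?k = "length Ys" and ?n = "length w" and ?U = "tval w I u" and ?y = "Suc (tv u)"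
  have f: "?y \<notin> tfv u" by (auto intro!: tv_fresh)
  have U: "?U < ?n" using tval_lt I w by blast
  have I2: "\<And>a. a < ?n \<Longrightarrow> \<forall>x. (I(?y := a)) x < ?n" using I by auto
  have "sat w I J (gen Concatenated Ys t' u) \<longleftrightarrow>
     (\<exists>t<?k. \<exists>a<?n. ?k * a + t = t' * ?n + ?U \<and> a \<in> J (Ys!t))"
  proof -
    have e: "\<And>t a. a < ?n \<Longrightarrow> sat w (I(?y:=a)) J (AF ?k t t' (Var ?y) u) \<longleftrightarrow> ?k*a + t = t'*?n + ?U"
    proof -
      fix t a assume a: "a < ?n"
      show "sat w (I(?y:=a)) J (AF ?k t t' (Var ?y) u) \<longleftrightarrow> ?k*a + t = t'*?n + ?U"
        using sat_AF[OF I2[OF a] w, of J ?k t t' "Var ?y" u] tval_upd[OF f, of w I a] by (simp only: tval.simps fun_upd_same)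
    qed
    show ?thesis by (simp add: sat_DisjL e atLeast0LessThan Bex_def cong: conj_cong)
  qed
  also have "\<dots> \<longleftrightarrow> (\<exists>t<?k. \<exists>a<?n. ?k * a + t = t' * ?n + ?U \<and> codebit (?n * ?k) i (a * ?k + t))"
    using J by auto
  also have "\<dots> \<longleftrightarrow> codebit (?n * ?k) i (t' * ?n + ?U)"
  proof
    assume "\<exists>t<?k. \<exists>a<?n. ?k * a + t = t' * ?n + ?U \<and> codebit (?n * ?k) i (a * ?k + t)"
    then show "codebit (?n * ?k) i (t' * ?n + ?U)" by (metis mult.commute)
  next
    assume h: "codebit (?n * ?k) i (t' * ?n + ?U)"
    have k0: "0 < ?k" using t by (cases Ys) auto
    have "t' * ?n + ?U < ?n * ?k"
    proof -
      have "t' * ?n + ?U < t' * ?n + ?n" using U by simp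
      also have "\<dots> = (t' + 1) * ?n" by simp
      also have "\<dots> \<le> ?k * ?n" using t by (intro mult_le_mono1) simp
      finally show ?thesis by (simp add: mult.commute)
    qed
    then have "(t' * ?n + ?U) div ?k < ?n"
      by (intro less_mult_imp_div_less) (simp add: mult.commute)
    moreover have "t' * ?n + ?U = ((t' * ?n + ?U) div ?k) * ?k + (t' * ?n + ?U) mod ?k" by simp
    ultimately show "\<exists>t<?k. \<exists>a<?n. ?k * a + t = t' * ?n + ?U \<and> codebit (?n * ?k) i (a * ?k + t)"
      using h k0 by (metis mod_less_divisor mult.commute)
  qed
  also have "\<dots> \<longleftrightarrow> ?U \<in> asg Concatenated ?n ?k i t'" using U by simp
  finally show ?thesis .
qed

lemma fsv_gen: "fsv (gen q Ys t u) \<subseteq> set Ys"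
  by (cases q) (auto simp: fsv_DisjL fsv_AF)

lemma fv_gen: "fv (gen q Ys t u) \<subseteq> tfv u"
proof -
  have f: "Suc (tv u) \<notin> tfv u" by (auto intro!: tv_fresh)
  show ?thesis using fv_AF f by (cases q) (fastforce simp: fv_DisjL)+
qed



fun subst :: "(nat \<Rightarrow> (tm \<Rightarrow> fm) option) \<Rightarrow> fm \<Rightarrow> fm" where
  "subst \<sigma> (SOAtom X t) = (case \<sigma> X of None \<Rightarrow> SOAtom X t | Some g \<Rightarrow> g t)"
| "subst \<sigma> (Neg \<phi>) = Neg (subst \<sigma> \<phi>)"
| "subst \<sigma> (Conj \<phi> \<psi>) = Conj (subst \<sigma> \<phi>) (subst \<sigma> \<psi>)"
| "subst \<sigma> (Disj \<phi> \<psi>) = Disj (subst \<sigma> \<phi>) (subst \<sigma> \<psi>)"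
| "subst \<sigma> (Ex x \<phi>) = Ex x (subst \<sigma> \<phi>)"
| "subst \<sigma> (All x \<phi>) = All x (subst \<sigma> \<phi>)"
| "subst \<sigma> (ExS X \<phi>) = ExS X (subst (\<sigma>(X := None)) \<phi>)"
| "subst \<sigma> (AllS X \<phi>) = AllS X (subst (\<sigma>(X := None)) \<phi>)"
| "subst \<sigma> (LQ q m L Xs \<phi>s) = LQ q m L Xs (map (subst (\<sigma> |` (- set Xs))) \<phi>s)"
| "subst \<sigma> \<phi> = \<phi>"

fun msv :: "fm \<Rightarrow> nat" where
  "msv (SOAtom X t) = X"
| "msv (Neg \<phi>) = msv \<phi>"
| "msv (Conj \<phi> \<psi>) = msv \<phi> + msv \<psi>"
| "msv (Disj \<phi> \<psi>) = msv \<phi> + msv \<psi>"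
| "msv (Ex x \<phi>) = msv \<phi>"
| "msv (All x \<phi>) = msv \<phi>"
| "msv (ExS X \<phi>) = X + msv \<phi>"
| "msv (AllS X \<phi>) = X + msv \<phi>"
| "msv (LQ q m L Xs \<phi>s) = sum_list Xs + sum_list (map msv \<phi>s)"
| "msv \<phi> = 0"

lemma msv_elem: "\<phi> \<in> set \<phi>s \<Longrightarrow> msv \<phi> \<le> sum_list (map msv \<phi>s)"
  by (simp add: member_le_sum_list)

lemma msv_Xs: "X \<in> set Xs \<Longrightarrow> X \<le> sum_list (Xs::nat list)"
  by (simp add: member_le_sum_list)

lemma fsv_msv: "X \<in> fsv \<phi> \<Longrightarrow> X \<le> msv \<phi>"
proof (induction \<phi>)
  case (LQ q m L Xs \<phi>s)
  then obtain \<phi> where "\<phi> \<in> set \<phi>s" "X \<in> fsv \<phi>" by auto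
  then show ?case using LQ.IH msv_elem[of \<phi> \<phi>s] by fastforce
qed auto

lemma subst_sat:
  assumes "\<forall>x. I x < length w" "w \<noteq> []"
    "\<forall>X. \<sigma> X = None \<longrightarrow> J' X = J X"
    "\<forall>X g. \<sigma> X = Some g \<longrightarrow> (\<forall>I u. (\<forall>x. I x < length w) \<longrightarrow> (sat w I J (g u) \<longleftrightarrow> tval w I u \<in> J' X))"
    "\<forall>X g. \<sigma> X = Some g \<longrightarrow> (\<forall>u. fsv (g u) \<subseteq> R)"
    "\<forall>Y\<in>R. msv \<psi> < Y"
  shows "sat w I J (subst \<sigma> \<psi>) = sat w I J' \<psi>"
  using assms
proof (induction \<psi> arbitrary: I J J' \<sigma>)
  case (SOAtom X t)
  then show ?case by (cases "\<sigma> X") auto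
next
  case (Neg \<phi>) then show ?case by simp
next
  case (Conj a b)
  have m: "\<forall>Y\<in>R. msv a < Y" "\<forall>Y\<in>R. msv b < Y" using Conj.prems(6) by fastforce+
  have "sat w I J (subst \<sigma> a) = sat w I J' a" using Conj.IH(1)[OF Conj.prems(1-5) m(1)] .
  moreover have "sat w I J (subst \<sigma> b) = sat w I J' b" using Conj.IH(2)[OF Conj.prems(1-5) m(2)] .
  ultimately show ?case by simp
next
  case (Disj a b)
  have m: "\<forall>Y\<in>R. msv a < Y" "\<forall>Y\<in>R. msv b < Y" using Disj.prems(6) by fastforce+
  have "sat w I J (subst \<sigma> a) = sat w I J' a" using Disj.IH(1)[OF Disj.prems(1-5) m(1)] .
  moreover have "sat w I J (subst \<sigma> b) = sat w I J' b" using Disj.IH(2)[OF Disj.prems(1-5) m(2)] .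
  ultimately show ?case by simp
next
  case (Ex x \<phi>)
  have "\<And>a. a < length w \<Longrightarrow> sat w (I(x:=a)) J (subst \<sigma> \<phi>) = sat w (I(x:=a)) J' \<phi>"
    using Ex.IH Ex.prems by simp
  then show ?case by (simp cong: conj_cong)
next
  case (All x \<phi>)
  have "\<And>a. a < length w \<Longrightarrow> sat w (I(x:=a)) J (subst \<sigma> \<phi>) = sat w (I(x:=a)) J' \<phi>"
    using All.IH All.prems by simp
  then show ?case by (simp cong: imp_cong)
next
  case (ExS Y \<phi>)
  have YR: "Y \<notin> R" using ExS.prems(6) by force
  have "\<And>A. sat w I (J(Y:=A)) (subst (\<sigma>(Y:=None)) \<phi>) = sat w I (J'(Y:=A)) \<phi>"
  proof -
    fix A
    show "sat w I (J(Y:=A)) (subst (\<sigma>(Y:=None)) \<phi>) = sat w I (J'(Y:=A)) \<phi>"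
    proof (rule ExS.IH)
      show "\<forall>X g. (\<sigma>(Y := None)) X = Some g \<longrightarrow> (\<forall>I u. (\<forall>x. I x < length w) \<longrightarrow>
         sat w I (J(Y := A)) (g u) = (tval w I u \<in> (J'(Y := A)) X))"
      proof (intro allI impI)
        fix X g and I :: "nat \<Rightarrow> nat" and u assume h: "(\<sigma>(Y := None)) X = Some g" "\<forall>x. I x < length w"
        then have X: "X \<noteq> Y" "\<sigma> X = Some g" by (auto split: if_splits)
        have "sat w I (J(Y := A)) (g u) = sat w I J (g u)"
          using ExS.prems(5) X YR by (intro coincidence) auto
        then show "sat w I (J(Y := A)) (g u) = (tval w I u \<in> (J'(Y := A)) X)"
          using ExS.prems(4) X h by auto
      qed
    qed (use ExS.prems in auto)
  qed
  then show ?case by simp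
next
  case (AllS Y \<phi>)
  have YR: "Y \<notin> R" using AllS.prems(6) by force
  have "\<And>A. sat w I (J(Y:=A)) (subst (\<sigma>(Y:=None)) \<phi>) = sat w I (J'(Y:=A)) \<phi>"
  proof -
    fix A
    show "sat w I (J(Y:=A)) (subst (\<sigma>(Y:=None)) \<phi>) = sat w I (J'(Y:=A)) \<phi>"
    proof (rule AllS.IH)
      show "\<forall>X g. (\<sigma>(Y := None)) X = Some g \<longrightarrow> (\<forall>I u. (\<forall>x. I x < length w) \<longrightarrow>
         sat w I (J(Y := A)) (g u) = (tval w I u \<in> (J'(Y := A)) X))"
      proof (intro allI impI)
        fix X g and I :: "nat \<Rightarrow> nat" and u assume h: "(\<sigma>(Y := None)) X = Some g" "\<forall>x. I x < length w"
        then have X: "X \<noteq> Y" "\<sigma> X = Some g" by (auto split: if_splits)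
        have "sat w I (J(Y := A)) (g u) = sat w I J (g u)"
          using AllS.prems(5) X YR by (intro coincidence) auto
        then show "sat w I (J(Y := A)) (g u) = (tval w I u \<in> (J'(Y := A)) X)"
          using AllS.prems(4) X h by auto
      qed
    qed (use AllS.prems in auto)
  qed
  then show ?case by simp
next
  case (LQ q m L Xs \<phi>s)
  have XR: "\<And>X. X \<in> set Xs \<Longrightarrow> X \<notin> R" using LQ.prems(6) msv_Xs by fastforce
  have "\<And>(As :: nat set list) \<phi>. \<phi> \<in> set \<phi>s \<Longrightarrow> length As = length Xs \<Longrightarrow>
     sat w I (upd_list J Xs As) (subst (\<sigma> |` (- set Xs)) \<phi>) = sat w I (upd_list J' Xs As) \<phi>"
  proof -
    fix As :: "nat set list" and \<phi> assume a: "\<phi> \<in> set \<phi>s" "length As = length Xs"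
    show "sat w I (upd_list J Xs As) (subst (\<sigma> |` (- set Xs)) \<phi>) = sat w I (upd_list J' Xs As) \<phi>"
    proof (rule LQ.IH[OF a(1)])
      show "\<forall>X. (\<sigma> |` (- set Xs)) X = None \<longrightarrow> upd_list J' Xs As X = upd_list J Xs As X"
      proof (intro allI impI)
        fix X assume "(\<sigma> |` (- set Xs)) X = None"
        then show "upd_list J' Xs As X = upd_list J Xs As X"
          using LQ.prems(3) a upd_list_eq upd_list_notin
          by (cases "X \<in> set Xs") (auto simp: restrict_map_def)
      qed
    next
      show "\<forall>X g. (\<sigma> |` (- set Xs)) X = Some g \<longrightarrow> (\<forall>I u. (\<forall>x. I x < length w) \<longrightarrow>
         sat w I (upd_list J Xs As) (g u) = (tval w I u \<in> upd_list J' Xs As X))"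
      proof (intro allI impI)
        fix X g and I :: "nat \<Rightarrow> nat" and u assume h: "(\<sigma> |` (- set Xs)) X = Some g" "\<forall>x. I x < length w"
        then have X: "X \<notin> set Xs" "\<sigma> X = Some g" by (auto simp: restrict_map_def split: if_splits)
        have "sat w I (upd_list J Xs As) (g u) = sat w I J (g u)"
        proof (intro coincidence ballI)
          fix Z assume "Z \<in> fsv (g u)"
          then have "Z \<in> R" using LQ.prems(5) X by blast
          then have "Z \<notin> set Xs" using XR by blast
          then show "upd_list J Xs As Z = J Z" by (rule upd_list_notin)
        qed
        then show "sat w I (upd_list J Xs As) (g u) = (tval w I u \<in> upd_list J' Xs As X)"
          using LQ.prems(4) X h by (auto simp: upd_list_notin)
      qed
    next
      show "\<forall>X g. (\<sigma> |` (- set Xs)) X = Some g \<longrightarrow> (\<forall>u. fsv (g u) \<subseteq> R)"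
        using LQ.prems(5) by (auto simp: restrict_map_def split: if_splits)
    next
      show "\<forall>Y\<in>R. msv \<phi> < Y" using LQ.prems(6) msv_elem[OF a(1)] by fastforce
    qed (use LQ.prems in auto)
  qed
  then show ?case by (simp cong: map_cong)
qed auto



fun flipq :: "qkind \<Rightarrow> qkind" where
  "flipq Interleaved = Concatenated" | "flipq Concatenated = Interleaved"

definition sig :: "qkind \<Rightarrow> nat list \<Rightarrow> nat list \<Rightarrow> nat \<Rightarrow> (tm \<Rightarrow> fm) option" where
  "sig q Xs Ys = map_of (zip Xs (map (gen q Ys) [0..<length Xs]))"

definition fbase :: "nat list \<Rightarrow> fm list \<Rightarrow> nat" where
  "fbase Xs \<psi>s = Suc (sum_list Xs + sum_list (map msv \<psi>s))"

definition mkLQ :: "qkind \<Rightarrow> nat \<Rightarrow> (nat list \<Rightarrow> bool) \<Rightarrow> nat list \<Rightarrow> fm list \<Rightarrow> fm" where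
  "mkLQ q m L Xs \<psi>s = LQ (flipq q) m L [fbase Xs \<psi>s..<fbase Xs \<psi>s + length Xs]
      (map (subst (sig q Xs [fbase Xs \<psi>s..<fbase Xs \<psi>s + length Xs])) \<psi>s)"

lemma sig_None: "sig q Xs Ys X = None \<longleftrightarrow> X \<notin> set Xs"
  by (simp add: sig_def)

lemma sig_Some: "sig q Xs Ys X = Some g \<Longrightarrow> \<exists>t<length Xs. X = Xs!t \<and> g = gen q Ys t"
proof -
  assume "sig q Xs Ys X = Some g"
  then have "(X, g) \<in> set (zip Xs (map (gen q Ys) [0..<length Xs]))"
    unfolding sig_def by (rule map_of_SomeD)
  then show ?thesis by (auto simp: in_set_zip)
qed

lemma mkLQ_sat:
  assumes dis: "distinct Xs" and I: "\<forall>x. I x < length w" and w: "w \<noteq> []"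
  shows "sat w I J (mkLQ q m L Xs \<psi>s) = sat w I J (LQ q m L Xs \<psi>s)"
proof -
  let ?N = "fbase Xs \<psi>s"
  let ?k = "length Xs"
  let ?n = "length w"
  define Ys where "Ys = [?N..<?N + ?k]"
  let ?\<sigma> = "sig q Xs Ys"
  have lY: "length Ys = ?k" by (simp add: Ys_def)
  have dY: "distinct Ys" by (simp add: Ys_def)
  have YX: "\<And>Y. Y \<in> set Ys \<Longrightarrow> Y \<notin> set Xs"
    using msv_Xs unfolding Ys_def fbase_def by fastforce
  have key: "sat w I (upd_list J Ys (map (asg (flipq q) ?n ?k i) [0..<?k])) (subst ?\<sigma> \<psi>) =
        sat w I (upd_list J Xs (map (asg q ?n ?k i) [0..<?k])) \<psi>" if \<psi>: "\<psi> \<in> set \<psi>s" for i \<psi>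
  proof -
    define As' where "As' = map (asg (flipq q) ?n ?k i) [0..<?k]"
    define As where "As = map (asg q ?n ?k i) [0..<?k]"
    define J1 where "J1 = upd_list J Ys As'"
    define J2 where "J2 = upd_list J1 Xs As"
    have fr: "\<forall>Y\<in>set Ys. msv \<psi> < Y"
      using msv_elem[OF \<psi>] unfolding Ys_def fbase_def by fastforce
    have J1Y: "\<And>t. t < ?k \<Longrightarrow> J1 (Ys!t) = asg (flipq q) ?n ?k i t"
      unfolding J1_def As'_def using upd_list_nth[OF dY] lY by simp
    have J2X: "\<And>t. t < ?k \<Longrightarrow> J2 (Xs!t) = asg q ?n ?k i t"
      unfolding J2_def As_def using upd_list_nth[OF dis] by simp
    have s1: "sat w I J1 (subst ?\<sigma> \<psi>) = sat w I J2 \<psi>"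
    proof (rule subst_sat[OF I w _ _ _ fr])
      show "\<forall>X. ?\<sigma> X = None \<longrightarrow> J2 X = J1 X"
        by (auto simp: sig_None J2_def upd_list_notin)
    next
      show "\<forall>X g. ?\<sigma> X = Some g \<longrightarrow> (\<forall>u. fsv (g u) \<subseteq> set Ys)"
        using sig_Some fsv_gen by blast
    next
      show "\<forall>X g. ?\<sigma> X = Some g \<longrightarrow> (\<forall>I u. (\<forall>x. I x < length w) \<longrightarrow> sat w I J1 (g u) = (tval w I u \<in> J2 X))"
      proof (intro allI impI)
        fix X g and I' :: "nat \<Rightarrow> nat" and u
        assume h: "?\<sigma> X = Some g" "\<forall>x. I' x < length w"
        then obtain t where t: "t < ?k" "X = Xs!t" "g = gen q Ys t" using sig_Some by blast
        show "sat w I' J1 (g u) = (tval w I' u \<in> J2 X)"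
        proof (cases q)
          case Interleaved
          have "sat w I' J1 (gen Interleaved Ys t u) \<longleftrightarrow> tval w I' u \<in> asg Interleaved ?n (length Ys) i t"
            by (rule sat_gen_I[OF h(2) w]) (use t J1Y lY Interleaved in auto)
          then show ?thesis using t J2X lY Interleaved by simp
        next
          case Concatenated
          have "sat w I' J1 (gen Concatenated Ys t u) \<longleftrightarrow> tval w I' u \<in> asg Concatenated ?n (length Ys) i t"
            by (rule sat_gen_C[OF h(2) w]) (use t J1Y lY Concatenated in auto)
          then show ?thesis using t J2X lY Concatenated by simp
        qed
      qed
    qed
    have s2: "sat w I J2 \<psi> = sat w I (upd_list J Xs As) \<psi>"
    proof (rule coincidence, intro ballI)
      fix X assume X: "X \<in> fsv \<psi>"
      then have "X \<notin> set Ys" using fsv_msv fr by fastforce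
      show "J2 X = upd_list J Xs As X"
      proof (cases "X \<in> set Xs")
        case True then show ?thesis unfolding J2_def using upd_list_eq As_def by simp
      next
        case False then show ?thesis unfolding J2_def J1_def
          using \<open>X \<notin> set Ys\<close> by (simp add: upd_list_notin)
      qed
    qed
    show ?thesis using s1 s2 unfolding J1_def As'_def As_def by simp
  qed
  show ?thesis
    unfolding mkLQ_def Ys_def[symmetric]
    by (simp add: lY key cong: map_cong)
qed

fun T :: "fm \<Rightarrow> fm" where
  "T (Neg \<phi>) = Neg (T \<phi>)"
| "T (Conj \<phi> \<psi>) = Conj (T \<phi>) (T \<psi>)"
| "T (Disj \<phi> \<psi>) = Disj (T \<phi>) (T \<psi>)"
| "T (Ex x \<phi>) = Ex x (T \<phi>)"
| "T (All x \<phi>) = All x (T \<phi>)"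
| "T (ExS X \<phi>) = ExS X (T \<phi>)"
| "T (AllS X \<phi>) = AllS X (T \<phi>)"
| "T (LQ q m L Xs \<phi>s) = mkLQ q m L Xs (map T \<phi>s)"
| "T \<phi> = \<phi>"

lemma T_sat:
  "SOMQ q s \<phi> \<Longrightarrow> \<forall>x. I x < length w \<Longrightarrow> w \<noteq> [] \<Longrightarrow> sat w I J (T \<phi>) = sat w I J \<phi>"
proof (induction \<phi> arbitrary: I J)
  case (LQ q' m L Xs \<phi>s)
  have d: "distinct Xs" using LQ.prems by (simp add: good_mon_quant_def)
  have "sat w I J (T (LQ q' m L Xs \<phi>s)) = sat w I J (LQ q' m L Xs (map T \<phi>s))"
    using mkLQ_sat[OF d LQ.prems(2,3)] by simp
  also have "\<dots> = sat w I J (LQ q' m L Xs \<phi>s)"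
    using LQ.IH LQ.prems by (simp cong: map_cong)
  finally show ?case .
next
  case (Ex x \<phi>) then show ?case by (simp cong: conj_cong)
next
  case (All x \<phi>) then show ?case by (simp cong: imp_cong)
qed auto



lemma fv_subst: "\<forall>X g. \<sigma> X = Some g \<longrightarrow> (\<forall>u. fv (g u) \<subseteq> tfv u) \<Longrightarrow> fv (subst \<sigma> \<psi>) \<subseteq> fv \<psi>"
proof (induction \<psi> arbitrary: \<sigma>)
  case (SOAtom X t) then show ?case by (cases "\<sigma> X") auto
next
  case (ExS X \<phi>)
  have "fv (subst (\<sigma>(X:=None)) \<phi>) \<subseteq> fv \<phi>" using ExS by (intro ExS.IH) auto
  then show ?case by simp
next
  case (AllS X \<phi>)
  have "fv (subst (\<sigma>(X:=None)) \<phi>) \<subseteq> fv \<phi>" using AllS by (intro AllS.IH) auto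
  then show ?case by simp
next
  case (LQ q m L Xs \<phi>s)
  have "\<And>\<phi>. \<phi> \<in> set \<phi>s \<Longrightarrow> fv (subst (\<sigma> |` (- set Xs)) \<phi>) \<subseteq> fv \<phi>"
    using LQ by (intro LQ.IH) (auto simp: restrict_map_def split: if_splits)
  then show ?case by auto
next
  case (Conj a b) then show ?case by (metis Un_mono fv.simps(8) subst.simps(3))
next
  case (Disj a b) then show ?case by (metis Un_mono fv.simps(9) subst.simps(4))
next
  case (Ex x \<phi>) then show ?case by auto
next
  case (All x \<phi>) then show ?case by auto
qed auto

lemma fsv_subst: "\<forall>X g. \<sigma> X = Some g \<longrightarrow> (\<forall>u. fsv (g u) \<subseteq> R) \<Longrightarrow>
   fsv (subst \<sigma> \<psi>) \<subseteq> (fsv \<psi> - {X. \<sigma> X \<noteq> None}) \<union> R"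
proof (induction \<psi> arbitrary: \<sigma>)
  case (SOAtom X t) then show ?case by (cases "\<sigma> X") auto
next
  case (ExS X \<phi>)
  have "fsv (subst (\<sigma>(X:=None)) \<phi>) \<subseteq> (fsv \<phi> - {Y. (\<sigma>(X:=None)) Y \<noteq> None}) \<union> R"
    using ExS by (intro ExS.IH) auto
  then show ?case by auto
next
  case (AllS X \<phi>)
  have "fsv (subst (\<sigma>(X:=None)) \<phi>) \<subseteq> (fsv \<phi> - {Y. (\<sigma>(X:=None)) Y \<noteq> None}) \<union> R"
    using AllS by (intro AllS.IH) auto
  then show ?case by auto
next
  case (LQ q m L Xs \<phi>s)
  have "\<And>\<phi>. \<phi> \<in> set \<phi>s \<Longrightarrow> fsv (subst (\<sigma> |` (- set Xs)) \<phi>) \<subseteq> (fsv \<phi> - {Y. (\<sigma> |` (- set Xs)) Y \<noteq> None}) \<union> R"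
    using LQ by (intro LQ.IH) (auto simp: restrict_map_def split: if_splits)
  then show ?case by (fastforce simp: restrict_map_def split: if_splits)
next
  case (Conj a b)
  have "fsv (subst \<sigma> a) \<subseteq> (fsv a - {X. \<sigma> X \<noteq> None}) \<union> R" by (rule Conj.IH(1)[OF Conj.prems])
  moreover have "fsv (subst \<sigma> b) \<subseteq> (fsv b - {X. \<sigma> X \<noteq> None}) \<union> R" by (rule Conj.IH(2)[OF Conj.prems])
  ultimately show ?case by auto
next
  case (Disj a b)
  have "fsv (subst \<sigma> a) \<subseteq> (fsv a - {X. \<sigma> X \<noteq> None}) \<union> R" by (rule Disj.IH(1)[OF Disj.prems])
  moreover have "fsv (subst \<sigma> b) \<subseteq> (fsv b - {X. \<sigma> X \<noteq> None}) \<union> R" by (rule Disj.IH(2)[OF Disj.prems])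
  ultimately show ?case by auto
qed auto

lemma fv_T: "fv (T \<phi>) \<subseteq> fv \<phi>"
proof (induction \<phi>)
  case (LQ q m L Xs \<phi>s)
  have "\<And>\<psi>. fv (subst (sig q Xs [fbase Xs (map T \<phi>s)..<fbase Xs (map T \<phi>s) + length Xs]) \<psi>) \<subseteq> fv \<psi>"
    by (rule fv_subst) (use sig_Some fv_gen in blast)
  then show ?case using LQ by (fastforce simp: mkLQ_def)
next
  case (Conj a b) then show ?case by auto
next
  case (Disj a b) then show ?case by auto
qed auto

lemma fsv_T: "fsv (T \<phi>) \<subseteq> fsv \<phi>"
proof (induction \<phi>)
  case (LQ q m L Xs \<phi>s)
  define Ys where "Ys = [fbase Xs (map T \<phi>s)..<fbase Xs (map T \<phi>s) + length Xs]"
  have "\<And>\<psi>. fsv (subst (sig q Xs Ys) \<psi>) \<subseteq> (fsv \<psi> - {X. sig q Xs Ys X \<noteq> None}) \<union> set Ys"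
    by (rule fsv_subst) (use sig_Some fsv_gen in blast)
  then have "\<And>\<psi>. fsv (subst (sig q Xs Ys) \<psi>) \<subseteq> (fsv \<psi> - set Xs) \<union> set Ys"
    by (simp add: sig_None)
  moreover have "T (LQ q m L Xs \<phi>s) = LQ (flipq q) m L Ys (map (subst (sig q Xs Ys)) (map T \<phi>s))"
    by (simp add: mkLQ_def Ys_def)
  ultimately show ?case using LQ.IH by fastforce
next
  case (Conj a b) then show ?case by auto
next
  case (Disj a b) then show ?case by auto
qed auto

lemma FO_AF: "is_FO s (AF c d q x r)"
  by (induction c d q x r rule: AF.induct) (auto simp: FF_def SuccF_def OvfF_def)

lemma SOMQ_AF: "SOMQ q0 s (AF c d q x r)"
  by (induction c d q x r rule: AF.induct) (auto simp: FF_def SuccF_def OvfF_def)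

lemma FO_DisjL: "\<forall>f\<in>set fs. is_FO s f \<Longrightarrow> is_FO s (DisjL fs)"
  by (induction fs) (auto simp: DisjL_def FF_def)

lemma SOMQ_DisjL: "\<forall>f\<in>set fs. SOMQ q0 s f \<Longrightarrow> SOMQ q0 s (DisjL fs)"
  by (induction fs) (auto simp: DisjL_def FF_def)

lemma FO_gen: "is_FO s (gen q Ys t u)"
  by (cases q) (auto intro!: FO_DisjL simp: FO_AF)

lemma SOMQ_gen: "SOMQ q0 s (gen q Ys t u)"
  by (cases q) (auto intro!: SOMQ_DisjL simp: SOMQ_AF)

lemma FO_subst: "\<forall>X g. \<sigma> X = Some g \<longrightarrow> (\<forall>u. is_FO s (g u)) \<Longrightarrow> is_FO s \<psi> \<Longrightarrow> is_FO s (subst \<sigma> \<psi>)"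
proof (induction \<psi> arbitrary: \<sigma>)
  case (SOAtom X t) then show ?case by (cases "\<sigma> X") auto
qed auto

lemma SOMQ_subst: "\<forall>X g. \<sigma> X = Some g \<longrightarrow> (\<forall>u. SOMQ q0 s (g u)) \<Longrightarrow> SOMQ q0 s \<psi> \<Longrightarrow> SOMQ q0 s (subst \<sigma> \<psi>)"
proof (induction \<psi> arbitrary: \<sigma>)
  case (SOAtom X t) then show ?case by (cases "\<sigma> X") auto
next
  case (ExS X \<phi>) then show ?case by simp
next
  case (AllS X \<phi>) then show ?case by simp
next
  case (LQ q m L Xs \<phi>s)
  have "\<forall>X g. (\<sigma> |` (- set Xs)) X = Some g \<longrightarrow> (\<forall>u. SOMQ q0 s (g u))"
    using LQ.prems(1) by (auto simp: restrict_map_def split: if_splits)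
  then show ?case using LQ by (auto simp: good_mon_quant_def)
qed auto

lemma T_FO: "is_FO s \<phi> \<Longrightarrow> T \<phi> = \<phi>"
  by (induction \<phi>) auto

lemma gmq_mk: "good_mon_quant m L Xs \<phi>s \<Longrightarrow>
  good_mon_quant m L [fbase Xs \<phi>s..<fbase Xs \<phi>s + length Xs] (map f \<phi>s)"
  by (auto simp: good_mon_quant_def)

lemma SOMQ_T: "SOMQ q s \<phi> \<Longrightarrow> SOMQ (flipq q) s (T \<phi>)"
proof (induction \<phi>)
  case (LQ q' m L Xs \<phi>s)
  have "\<And>\<psi>. \<psi> \<in> set \<phi>s \<Longrightarrow> SOMQ (flipq q) s (subst (sig q' Xs [fbase Xs (map T \<phi>s)..<fbase Xs (map T \<phi>s) + length Xs]) (T \<psi>))"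
    using LQ by (intro SOMQ_subst) (auto dest!: sig_Some simp: SOMQ_gen)
  moreover have "good_mon_quant m L [fbase Xs (map T \<phi>s)..<fbase Xs (map T \<phi>s) + length Xs]
     (map (subst (sig q' Xs [fbase Xs (map T \<phi>s)..<fbase Xs (map T \<phi>s) + length Xs])) (map T \<phi>s))"
    using LQ.prems by (auto simp: good_mon_quant_def)
  ultimately show ?case using LQ.prems by (auto simp: mkLQ_def)
qed auto

lemma QMon_T: "QMonFO q s \<phi> \<Longrightarrow> QMonFO (flipq q) s (T \<phi>)"
proof (cases \<phi>)
  case (LQ q' m L Xs \<phi>s)
  assume h: "QMonFO q s \<phi>"
  have "map T \<phi>s = \<phi>s" using h LQ by (intro map_idI) (auto intro: T_FO)
  moreover have "\<And>\<psi>. \<psi> \<in> set \<phi>s \<Longrightarrow> is_FO s (subst (sig q' Xs [fbase Xs \<phi>s..<fbase Xs \<phi>s + length Xs]) \<psi>)"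
    using h LQ by (intro FO_subst) (auto dest!: sig_Some simp: FO_gen)
  moreover have "good_mon_quant m L [fbase Xs \<phi>s..<fbase Xs \<phi>s + length Xs]
     (map (subst (sig q' Xs [fbase Xs \<phi>s..<fbase Xs \<phi>s + length Xs])) \<phi>s)"
    using h LQ by (auto simp: good_mon_quant_def)
  ultimately show ?thesis using h LQ by (auto simp: mkLQ_def)
qed auto

lemma FO_SOMQ: "is_FO s \<phi> \<Longrightarrow> SOMQ q s \<phi>"
  by (induction \<phi>) auto

lemma QMon_SOMQ: "QMonFO q s \<phi> \<Longrightarrow> SOMQ q s \<phi>"
  by (cases \<phi>) (auto intro: FO_SOMQ)

lemma sentence_T: "sentence \<phi> \<Longrightarrow> sentence (T \<phi>)"
  using fv_T fsv_T unfolding sentence_def by blast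

lemma equiv_T: "SOMQ q s \<phi> \<Longrightarrow> equivalent_on s \<phi> (T \<phi>) \<and> equivalent_on s (T \<phi>) \<phi>"
  unfolding equivalent_on_def models_def using T_sat[of q s \<phi> "\<lambda>_. 0"] by auto

lemma flipq_flipq: "flipq (flipq q) = q" by (cases q) auto

lemma logic_equiv_gen:
  assumes "\<And>q s \<phi>. \<L> q s \<phi> \<Longrightarrow> \<L> (flipq q) s (T \<phi>)"
    and "\<And>q s \<phi>. \<L> q s \<phi> \<Longrightarrow> SOMQ q s \<phi>"
  shows "logic_equiv (\<L> Interleaved) (\<L> Concatenated)"
  unfolding logic_equiv_def
proof (intro allI impI conjI)
  fix s :: nat and \<phi>
  assume h: "\<L> Interleaved s \<phi> \<and> sentence \<phi>"
  show "\<exists>\<psi>. \<L> Concatenated s \<psi> \<and> sentence \<psi> \<and> equivalent_on s \<phi> \<psi>"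
    apply (rule exI[of _ "T \<phi>"])
    using h assms(1)[of Interleaved s \<phi>] equiv_T[OF assms(2)[of Interleaved s \<phi>]] sentence_T[of \<phi>] by simp
next
  fix s :: nat and \<psi>
  assume h: "\<L> Concatenated s \<psi> \<and> sentence \<psi>"
  show "\<exists>\<phi>. \<L> Interleaved s \<phi> \<and> sentence \<phi> \<and> equivalent_on s \<phi> \<psi>"
    apply (rule exI[of _ "T \<psi>"])
    using h assms(1)[of Concatenated s \<psi>] equiv_T[OF assms(2)[of Concatenated s \<psi>]] sentence_T[of \<psi>] by simp
qed

theorem theorem4p2:
  shows "logic_equiv (QMonFO Interleaved) (QMonFO Concatenated)
       \<and> logic_equiv (SOMQ Interleaved) (SOMQ Concatenated)"
  using logic_equiv_gen[of QMonFO, OF QMon_T QMon_SOMQ] logic_equiv_gen[of SOMQ, OF SOMQ_T] by blast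

end
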